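(* In the setting below, let $i\in\{1,\dots,\overline M\}$ with $\overline S_i=S_a\times\{b\}$ and put $\overline\tau^\varepsilon_i:=\tau^\varepsilon_{ab}$. For every bounded continuous $f:[0,\infty)\to\mathbb R$, $$\lim_{\varepsilon\downarrow0}\Big(\mathbb E f\Big(\frac{\overline T^\varepsilon(\bar x_1,\overline S_{j_1})}{\overline\tau^\varepsilon_i}\Big)-\mathbb E f\Big(\frac{\overline T^\varepsilon(\bar x_2,\overline S_{j_2})}{\overline\tau^\varepsilon_i}\Big)\Big)=0$$ uniformly in $\bar x_1,\bar x_2\in\overline S_i$ and $j_1,j_2\in\{1,\dots,\overline M\}$ with $\overline P^\varepsilon_{ij_1},\overline P^\varepsilon_{ij_2}>0$.
   Context: $S$ is a metric space partitioned into disjoint Borel sets $S_1,\dots,S_M$; for $\varepsilon>0$, $Q^\varepsilon$ is a Markov kernel from $S$ to $S\times[0,\infty)$, $P^\varepsilon(x,B)=Q^\varepsilon(x,B\times[0,\infty))$, and for $P^\varepsilon(x,B)>0$, $T^\varepsilon(x,B)$ has law $\mathbb P(T^\varepsilon(x,B)\le t)=Q^\varepsilon(x,B\times[0,t])/P^\varepsilon(x,B)$. Assumptions: $P^\varepsilon(x,S_i)=0$ for $x\in S_i$; for $i\ne j$, either $P^\varepsilon(x,S_j)=0$ for all $x\in S_i,\varepsilon$ (set $P^\varepsilon_{ij}\equiv0$) or it is positive for all $x\in S_i,\varepsilon$ and there are positive $P^\varepsilon_{ij}$ with $P^\varepsilon(x,S_j)/P^\varepsilon_{ij}\to1$ uniformly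 in $x\in S_i$; for $P^\varepsilon_{ij}\not\equiv0$ there are positive $\tau^\varepsilon_{ij}$ with $\mathbb ET^\varepsilon(x,S_j)/\tau^\varepsilon_{ij}\to1$ uniformly in $x\in S_i$; for every bounded continuous $f$ and $P^\varepsilon_{ij}\not\equiv0$, $\mathbb E f(T^\varepsilon(x_1,S_j)/\tau^\varepsilon_{ij})-\mathbb E f(T^\varepsilon(x_2,S_j)/\tau^\varepsilon_{ij})\to0$ uniformly in $x_1,x_2\in S_i$. Extended process: $\overline S=\{(x,j):x\in S_i,\ P^\varepsilon_{ij}\not\equiv0\}$ with kernel $\overline Q^\varepsilon((x,j),(A\times\{k\})\times I)=\frac{1}{P^\varepsilon(x,S_j)}\int_{A\cap S_j}P^\varepsilon(y,S_k)Q^\varepsilon(x,dy\times I)$; $\overline S$ is partitioned into sets $S_a\times\{b\}$ with $P^\varepsilon_{ab}\not\equiv0$, re-indexed $\overline S_1,\dots,\overline S_{\overline M}$; $\overline P^\varepsilon(\bar x,B)=\overline Q^\varepsilon(\bar x,B\times[0,\infty))$; $\overline T^\varepsilon(\bar x,B)$ has law $\overline Q^\varepsilon(\bar x,B\times\cdot)/\overline P^\varepsilon(\bar x,B)$. If $\overline S_i=S_a\times\{b\}$, $\overline S_j=S_c\times\{d\}$, then $\overline P^\varepsilon_{ij}=P^\varepsilon_{cd}$ if $b=c$ and $\equiv0$ otherwise. *)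

theory Defs
  imports "HOL-Probability.Probability"
begin

text \<open>A kernel from a state space to (state) x [0,oo) is represented as
  Q :: real => 's => ('s * real) measure (first argument: epsilon).\<close>

definition Pk :: "(real \<Rightarrow> 's \<Rightarrow> ('s \<times> real) measure) \<Rightarrow> real \<Rightarrow> 's \<Rightarrow> 's set \<Rightarrow> real" where
  "Pk Q e x B = measure (Q e x) (B \<times> {0..})"

text \<open>E g(T^eps(x,B)), where T^eps(x,B) has law Q^eps(x, B x .)/P^eps(x,B) on [0,oo).\<close>
definition ET :: "(real \<Rightarrow> 's \<Rightarrow> ('s \<times> real) measure) \<Rightarrow> real \<Rightarrow> 's \<Rightarrow> 's set
    \<Rightarrow> (real \<Rightarrow> real) \<Rightarrow> real" where
  "ET Q e x B g = (\<integral>z. indicator (B \<times> {0..}) z * g (snd z) \<partial>(Q e x)) / Pk Q e x B"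

definition conn :: "(real \<Rightarrow> nat \<Rightarrow> nat \<Rightarrow> real) \<Rightarrow> nat \<Rightarrow> nat \<Rightarrow> bool" where
  "conn Pij i j \<longleftrightarrow> \<not> (\<forall>e>0. Pij e i j = 0)"

definition Qbar :: "nat \<Rightarrow> (nat \<Rightarrow> 'a::topological_space set)
    \<Rightarrow> (real \<Rightarrow> 'a \<Rightarrow> ('a \<times> real) measure)
    \<Rightarrow> real \<Rightarrow> ('a \<times> nat) \<Rightarrow> (('a \<times> nat) \<times> real) measure" where
  "Qbar M S Q e xj = (case xj of (x, j) \<Rightarrow>
     measure_of UNIV (sets borel)
       (\<lambda>E. ennreal (1 / Pk Q e x (S j)) *
          (\<integral>\<^sup>+ z. indicator (S j) (fst z) *
              (\<Sum>k\<in>{1..M}. ennreal (Pk Q e (fst z) (S k)) * indicator E ((fst z, k), snd z))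
           \<partial>(Q e x))))"

definition Pbar :: "(real \<Rightarrow> nat \<Rightarrow> nat \<Rightarrow> real) \<Rightarrow> real \<Rightarrow> nat \<times> nat \<Rightarrow> nat \<times> nat \<Rightarrow> real" where
  "Pbar Pij e i j = (if snd i = fst j then Pij e (fst j) (snd j) else 0)"

definition Sbar :: "(nat \<Rightarrow> 'a set) \<Rightarrow> nat \<times> nat \<Rightarrow> ('a \<times> nat) set" where
  "Sbar S i = S (fst i) \<times> {snd i}"

definition Sbar_idx :: "nat \<Rightarrow> (real \<Rightarrow> nat \<Rightarrow> nat \<Rightarrow> real) \<Rightarrow> (nat \<times> nat) set" where
  "Sbar_idx M Pij = {(a, b). a \<in> {1..M} \<and> b \<in> {1..M} \<and> conn Pij a b}"

end

theory Submission
  imports Defs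
begin


lemma Pk_meas:
  fixes Q :: "real \<Rightarrow> 'a::metric_space \<Rightarrow> ('a \<times> real) measure"
  assumes Qk: "Q e \<in> borel \<rightarrow>\<^sub>M subprob_algebra borel" and B: "B \<in> sets borel"
  shows "(\<lambda>y. Pk Q e y B) \<in> borel_measurable borel"
proof -
  have fm: "fst \<in> borel_measurable (borel :: ('a \<times> real) measure)"
    by (intro borel_measurable_continuous_onI continuous_intros)
  have sm: "snd \<in> borel_measurable (borel :: ('a \<times> real) measure)"
    by (intro borel_measurable_continuous_onI continuous_intros)
  have "B \<times> {0..} = fst -` B \<inter> snd -` {0..}" by auto
  also have "\<dots> \<in> sets (borel :: ('a \<times> real) measure)"
    using measurable_sets[OF fm B] measurable_sets[OF sm, of "{0..}"] by auto
  finally have BB: "B \<times> {0..} \<in> sets (borel :: ('a \<times> real) measure)" .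
  show ?thesis unfolding Pk_def measure_def
    by (rule borel_measurable_enn2real, rule measurable_compose[OF Qk measurable_emeasure_subprob_algebra[OF BB]])
qed



lemma psi_meas: "(\<lambda>z::('a::metric_space \<times> real). ((fst z, k::nat), snd z)) \<in> borel_measurable borel"
  by (intro borel_measurable_continuous_onI continuous_intros)

lemma fst_meas: "(fst :: ('a::metric_space \<times> real) \<Rightarrow> 'a) \<in> borel_measurable borel"
  by (intro borel_measurable_continuous_onI continuous_intros)

lemma integrand_meas:
  fixes Q :: "real \<Rightarrow> 'a::metric_space \<Rightarrow> ('a \<times> real) measure" and E :: "(('a \<times> nat) \<times> real) set"
  assumes Qk: "Q e \<in> borel \<rightarrow>\<^sub>M subprob_algebra borel"
    and Sb: "\<forall>i\<in>{1..M}. S i \<in> sets borel" and Sj: "S j \<in> sets borel"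
    and E: "E \<in> sets borel"
  shows "(\<lambda>z. indicator (S j) (fst z) * (\<Sum>k\<in>{1..M}. ennreal (Pk Q e (fst z) (S k)) * indicator E ((fst z, k), snd z)) :: ennreal) \<in> borel_measurable borel"
proof -
  have a: "(\<lambda>z::'a \<times> real. indicator (S j) (fst z) :: ennreal) \<in> borel_measurable borel"
    by (rule measurable_compose[OF fst_meas borel_measurable_indicator[OF Sj]])
  have b: "(\<lambda>z::'a \<times> real. ennreal (Pk Q e (fst z) (S k)) * indicator E ((fst z, k), snd z)) \<in> borel_measurable borel"
    if "k \<in> {1..M}" for k
  proof -
    have "(\<lambda>z::'a \<times> real. Pk Q e (fst z) (S k)) \<in> borel_measurable borel"
      by (rule measurable_compose[OF fst_meas Pk_meas[of Q e, OF Qk]]) (use Sb that in auto)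
    moreover have "(\<lambda>z::'a \<times> real. indicator E ((fst z, k), snd z) :: ennreal) \<in> borel_measurable borel"
      by (rule measurable_compose[OF psi_meas borel_measurable_indicator[OF E]])
    ultimately show ?thesis by measurable
  qed
  show ?thesis using a b by measurable
qed



lemma Qbar_emeasure:
  fixes Q :: "real \<Rightarrow> 'a::metric_space \<Rightarrow> ('a \<times> real) measure" and E :: "(('a \<times> nat) \<times> real) set"
  assumes Qk: "Q e \<in> borel \<rightarrow>\<^sub>M subprob_algebra borel"
    and Sb: "\<forall>i\<in>{1..M}. S i \<in> sets borel" and Sj: "S j \<in> sets borel"
    and E: "E \<in> sets borel"
  shows "emeasure (Qbar M S Q e (x,j)) E = ennreal (1 / Pk Q e x (S j)) *
          (\<integral>\<^sup>+ z. indicator (S j) (fst z) *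
              (\<Sum>k\<in>{1..M}. ennreal (Pk Q e (fst z) (S k)) * indicator E ((fst z, k), snd z))
           \<partial>(Q e x))"
proof -
  define F where "F = (\<lambda>(E :: (('a \<times> nat) \<times> real) set) (z :: 'a \<times> real). indicator (S j) (fst z) *
              (\<Sum>k\<in>{1..M}. ennreal (Pk Q e (fst z) (S k)) * indicator E ((fst z, k), snd z)) :: ennreal)"
  have setsQ: "sets (Q e x) = sets borel" by (rule sets_kernel[OF Qk]) simp
  have Fm: "F E' \<in> borel_measurable (Q e x)" if "E' \<in> sets borel" for E'
    unfolding F_def measurable_cong_sets[OF setsQ refl]
    by (rule integrand_meas[of Q e M S j, OF Qk Sb Sj that])
  have sa: "sigma_algebra UNIV (sets (borel :: (('a \<times> nat) \<times> real) measure))"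
    using sets.sigma_algebra_axioms[of "borel :: (('a \<times> nat) \<times> real) measure"] by simp
  have pos: "positive (sets borel) (\<lambda>E. ennreal (1 / Pk Q e x (S j)) * integral\<^sup>N (Q e x) (F E))"
    unfolding positive_def F_def by simp
  have ca: "countably_additive (sets borel) (\<lambda>E. ennreal (1 / Pk Q e x (S j)) * integral\<^sup>N (Q e x) (F E))"
    unfolding countably_additive_def
  proof (intro allI impI)
    fix A :: "nat \<Rightarrow> (('a \<times> nat) \<times> real) set"
    assume A: "range A \<subseteq> sets borel" "disjoint_family A" "\<Union> (range A) \<in> sets borel"
    have pt: "(\<Sum>i. F (A i) z) = F (\<Union> (range A)) z" for z
    proof -
      have "(\<Sum>i. F (A i) z) = indicator (S j) (fst z) * (\<Sum>i. \<Sum>k\<in>{1..M}. ennreal (Pk Q e (fst z) (S k)) * indicator (A i) ((fst z, k), snd z))"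
        unfolding F_def by simp
      also have "\<dots> = indicator (S j) (fst z) * (\<Sum>k\<in>{1..M}. \<Sum>i. ennreal (Pk Q e (fst z) (S k)) * indicator (A i) ((fst z, k), snd z))"
        by (subst suminf_sum) auto
      also have "\<dots> = F (\<Union> (range A)) z"
        unfolding F_def by (simp add: suminf_indicator[OF A(2)])
      finally show ?thesis .
    qed
    have "(\<Sum>i. ennreal (1 / Pk Q e x (S j)) * integral\<^sup>N (Q e x) (F (A i)))
        = ennreal (1 / Pk Q e x (S j)) * (\<Sum>i. integral\<^sup>N (Q e x) (F (A i)))" by simp
    also have "(\<Sum>i. integral\<^sup>N (Q e x) (F (A i))) = (\<integral>\<^sup>+ z. (\<Sum>i. F (A i) z) \<partial>Q e x)"
      by (rule nn_integral_suminf[symmetric]) (use Fm A(1) in auto)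
    also have "\<dots> = integral\<^sup>N (Q e x) (F (\<Union> (range A)))" by (simp add: pt)
    finally show "(\<Sum>i. ennreal (1 / Pk Q e x (S j)) * integral\<^sup>N (Q e x) (F (A i))) =
         ennreal (1 / Pk Q e x (S j)) * integral\<^sup>N (Q e x) (F (\<Union> (range A)))" .
  qed
  have "emeasure (Qbar M S Q e (x,j)) E = ennreal (1 / Pk Q e x (S j)) * integral\<^sup>N (Q e x) (F E)"
  proof -
    have eq: "Qbar M S Q e (x,j) = measure_of UNIV (sets borel) (\<lambda>E. ennreal (1 / Pk Q e x (S j)) * integral\<^sup>N (Q e x) (F E))"
      unfolding Qbar_def F_def by simp
    show ?thesis unfolding eq by (rule emeasure_measure_of_sigma[OF sa pos ca E])
  qed
  then show ?thesis unfolding F_def .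
qed

lemma Qbar_sets: "sets (Qbar M S Q e (x,j)) = sets borel"
  unfolding Qbar_def by (simp add: sets_measure_of_conv sets.sigma_sets_eq[of borel, simplified])



lemma times_borel:
  fixes A :: "'a::topological_space set" and B :: "'b::topological_space set"
  assumes "A \<in> sets borel" "B \<in> sets borel"
  shows "A \<times> B \<in> sets (borel :: ('a \<times> 'b) measure)"
proof -
  have fm: "fst \<in> borel_measurable (borel :: ('a \<times> 'b) measure)"
    by (intro borel_measurable_continuous_onI continuous_intros)
  have sm: "snd \<in> borel_measurable (borel :: ('a \<times> 'b) measure)"
    by (intro borel_measurable_continuous_onI continuous_intros)
  have "A \<times> B = fst -` A \<inter> snd -` B" by auto
  also have "\<dots> \<in> sets (borel :: ('a \<times> 'b) measure)"
    using measurable_sets[OF fm assms(1)] measurable_sets[OF sm assms(2)] by auto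
  finally show ?thesis .
qed

lemma Pk_nonneg: "Pk Q e x B \<ge> 0" unfolding Pk_def by simp

lemma Qbar_integral:
  fixes Q :: "real \<Rightarrow> 'a::metric_space \<Rightarrow> ('a \<times> real) measure" and G :: "real \<Rightarrow> real"
  assumes Qk: "Q e \<in> borel \<rightarrow>\<^sub>M subprob_algebra borel"
    and Sb: "\<forall>i\<in>{1..M}. S i \<in> sets borel" and b: "S b \<in> sets borel" and d: "d \<in> {1..M}"
    and G: "G \<in> borel_measurable borel"
  shows "(\<integral>z. indicator ((S b \<times> {d}) \<times> {0..}) z * G (snd z) \<partial>(Qbar M S Q e (x,b)))
     = (1 / Pk Q e x (S b)) * (\<integral>y. indicator (S b \<times> {0..}) y * Pk Q e (fst y) (S d) * G (snd y) \<partial>(Q e x))"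
proof -
  define c where "c = 1 / Pk Q e x (S b)"
  have c0: "c \<ge> 0" unfolding c_def using Pk_nonneg[of Q e x "S b"] by simp
  define C :: "(('a \<times> nat) \<times> real) set" where "C = ((S b \<times> {d}) \<times> {0..})"
  have Sd: "S d \<in> sets borel" using Sb d by auto
  have Cb: "C \<in> sets borel" unfolding C_def
    by (intro times_borel) (auto simp: b)
  define W where "W = (\<lambda>z::'a \<times> real. c * indicator (S b) (fst z) * Pk Q e (fst z) (S d))"
  define \<phi> where "\<phi> = (\<lambda>z::'a \<times> real. ((fst z, d), snd z))"
  have setsQ: "sets (Q e x) = sets borel" by (rule sets_kernel[OF Qk]) simp
  have \<phi>m: "\<phi> \<in> measurable (Q e x) borel"
    unfolding \<phi>_def measurable_cong_sets[OF setsQ refl] by (rule psi_meas)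
  have Pdm: "(\<lambda>z::'a \<times> real. Pk Q e (fst z) (S d)) \<in> borel_measurable borel"
    by (rule measurable_compose[OF fst_meas Pk_meas[of Q e, OF Qk Sd]])
  have indm: "(\<lambda>z::'a \<times> real. indicator (S b) (fst z) :: real) \<in> borel_measurable borel"
    by (rule measurable_compose[OF fst_meas borel_measurable_indicator[OF b]])
  have Wm: "W \<in> borel_measurable (Q e x)"
    unfolding W_def measurable_cong_sets[OF setsQ refl] using Pdm indm by measurable
  have W0: "W z \<ge> 0" for z unfolding W_def using c0 Pk_nonneg[of Q e "fst z" "S d"] by simp
  define \<nu> where "\<nu> = distr (density (Q e x) (\<lambda>z. ennreal (W z))) borel \<phi>"
  have \<phi>m': "\<phi> \<in> measurable (density (Q e x) (\<lambda>z. ennreal (W z))) borel"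
    using \<phi>m by simp
  have restr: "restrict_space (Qbar M S Q e (x,b)) C = restrict_space \<nu> C"
  proof (rule measure_eqI)
    show "sets (restrict_space (Qbar M S Q e (x,b)) C) = sets (restrict_space \<nu> C)"
      unfolding \<nu>_def sets_restrict_space by (simp add: Qbar_sets)
  next
    fix A assume "A \<in> sets (restrict_space (Qbar M S Q e (x,b)) C)"
    then have AC: "A \<subseteq> C" and Ab: "A \<in> sets borel"
      using sets_restrict_space_iff[of C "Qbar M S Q e (x,b)" A] Cb by (auto simp: Qbar_sets)
    have l: "emeasure (restrict_space (Qbar M S Q e (x,b)) C) A = emeasure (Qbar M S Q e (x,b)) A"
      by (rule emeasure_restrict_space) (use Cb AC in \<open>auto simp: Qbar_sets\<close>)
    have r: "emeasure (restrict_space \<nu> C) A = emeasure \<nu> A"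
      by (rule emeasure_restrict_space) (use Cb AC in \<open>auto simp: \<nu>_def\<close>)
    have sumeq: "(\<Sum>k\<in>{1..M}. ennreal (Pk Q e (fst z) (S k)) * indicator A ((fst z, k), snd z))
        = ennreal (Pk Q e (fst z) (S d)) * indicator A (\<phi> z)" for z
    proof -
      have "(\<Sum>k\<in>{1..M}. ennreal (Pk Q e (fst z) (S k)) * indicator A ((fst z, k), snd z))
         = (\<Sum>k\<in>{1..M}. if k = d then ennreal (Pk Q e (fst z) (S d)) * indicator A (\<phi> z) else 0)"
        by (rule sum.cong) (use AC in \<open>auto simp: C_def \<phi>_def indicator_def\<close>)
      also have "\<dots> = ennreal (Pk Q e (fst z) (S d)) * indicator A (\<phi> z)"
        using d by (simp add: sum.delta)
      finally show ?thesis .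
    qed
    have "emeasure (Qbar M S Q e (x,b)) A = ennreal c * (\<integral>\<^sup>+ z. indicator (S b) (fst z) *
            (ennreal (Pk Q e (fst z) (S d)) * indicator A (\<phi> z)) \<partial>(Q e x))"
      unfolding c_def Qbar_emeasure[of Q e M S b, OF Qk Sb b Ab] sumeq ..
    also have "\<dots> = (\<integral>\<^sup>+ z. ennreal c * (indicator (S b) (fst z) *
            (ennreal (Pk Q e (fst z) (S d)) * indicator A (\<phi> z))) \<partial>(Q e x))"
    proof (rule nn_integral_cmult[symmetric])
      have "(\<lambda>z::'a \<times> real. indicator A (\<phi> z) :: ennreal) \<in> borel_measurable borel"
        unfolding \<phi>_def by (rule measurable_compose[OF psi_meas borel_measurable_indicator[OF Ab]])
      moreover have "(\<lambda>z::'a \<times> real. indicator (S b) (fst z) :: ennreal) \<in> borel_measurable borel"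
        by (rule measurable_compose[OF fst_meas borel_measurable_indicator[OF b]])
      ultimately show "(\<lambda>z. indicator (S b) (fst z) * (ennreal (Pk Q e (fst z) (S d)) * indicator A (\<phi> z))) \<in> borel_measurable (Q e x)"
        unfolding measurable_cong_sets[OF setsQ refl] using Pdm
        by (intro borel_measurable_times_ennreal measurable_compose[OF Pdm measurable_ennreal]) auto
    qed
    also have "\<dots> = (\<integral>\<^sup>+ z. ennreal (W z) * indicator (\<phi> -` A \<inter> space (Q e x)) z \<partial>(Q e x))"
      by (rule nn_integral_cong) (auto simp: W_def indicator_def ennreal_mult c0 Pk_nonneg)
    also have "\<dots> = emeasure \<nu> A"
      unfolding \<nu>_def
      using emeasure_density[OF measurable_compose[OF Wm measurable_ennreal] measurable_sets[OF \<phi>m Ab]]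
      by (simp add: emeasure_distr[OF \<phi>m' Ab])
    finally show "emeasure (restrict_space (Qbar M S Q e (x,b)) C) A = emeasure (restrict_space \<nu> C) A"
      using l r by simp
  qed
  have "(\<integral>z. indicator C z * G (snd z) \<partial>(Qbar M S Q e (x,b))) = (\<integral>z. G (snd z) \<partial>(restrict_space (Qbar M S Q e (x,b)) C))"
    by (subst integral_restrict_space) (use Cb in \<open>auto simp: Qbar_sets\<close>)
  also have "\<dots> = (\<integral>z. G (snd z) \<partial>(restrict_space \<nu> C))" by (simp add: restr)
  also have "\<dots> = (\<integral>z. indicator C z * G (snd z) \<partial>\<nu>)"
    by (subst integral_restrict_space) (use Cb in \<open>auto simp: \<nu>_def\<close>)
  also have "\<dots> = (\<integral>z. W z * (indicator C (\<phi> z) * G (snd (\<phi> z))) \<partial>(Q e x))"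
  proof -
    have sndm: "(snd :: ('a \<times> nat) \<times> real \<Rightarrow> real) \<in> borel_measurable borel"
      by (intro borel_measurable_continuous_onI continuous_intros)
    have Hm: "(\<lambda>z::('a \<times> nat) \<times> real. indicator C z * G (snd z)) \<in> borel_measurable borel"
      using borel_measurable_indicator[OF Cb] measurable_compose[OF sndm G] by (rule borel_measurable_times)
    show ?thesis
    unfolding \<nu>_def
    apply (subst integral_distr[OF \<phi>m' Hm])
    apply (subst integral_density)
       apply (rule measurable_compose[OF \<phi>m Hm])
      apply (rule Wm)
     apply (simp add: W0)
    apply simp
    done
  qed
  also have "\<dots> = (\<integral>y. c * (indicator (S b \<times> {0..}) y * Pk Q e (fst y) (S d) * G (snd y)) \<partial>(Q e x))"
    by (rule Bochner_Integration.integral_cong) (auto simp: W_def C_def \<phi>_def indicator_def)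
  also have "\<dots> = c * (\<integral>y. indicator (S b \<times> {0..}) y * Pk Q e (fst y) (S d) * G (snd y) \<partial>(Q e x))"
    by simp
  finally show ?thesis unfolding C_def c_def .
qed



lemma alg:
  fixes m p \<eta> K D N I :: real
  assumes m: "m > 0" and p: "p > 0" and eta: "0 \<le> \<eta>" "\<eta> \<le> 1/2" and K: "K \<ge> 0"
    and hD: "\<bar>D - p*m\<bar> \<le> \<eta>*p*m" and hN: "\<bar>N - p*I\<bar> \<le> \<eta>*p*K*m" and hI: "\<bar>I\<bar> \<le> K*m"
  shows "\<bar>N/D - I/m\<bar> \<le> 4*\<eta>*K"
proof -
  have pm: "p*m > 0" using m p by simp
  have "\<eta>*(p*m) \<le> (1/2)*(p*m)" using eta pm by (intro mult_right_mono) auto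
  then have Dlow: "D \<ge> p*m/2" using hD by (simp add: abs_le_iff mult.assoc)
  hence D0: "D > 0" using pm by simp
  have eq: "N/D - I/m = ((N - p*I)*m + I*(p*m - D)) / (D*m)"
    using D0 m by (simp add: field_simps)
  have "\<bar>(N - p*I)*m + I*(p*m - D)\<bar> \<le> \<bar>N - p*I\<bar>*m + \<bar>I\<bar>*\<bar>p*m - D\<bar>"
    using abs_triangle_ineq[of "(N - p*I)*m" "I*(p*m - D)"] m by (simp add: abs_mult)
  also have "\<dots> \<le> (\<eta>*p*K*m)*m + (K*m)*(\<eta>*p*m)"
  proof (intro add_mono mult_mono)
    show "\<bar>p * m - D\<bar> \<le> \<eta> * p * m" using hD by (simp add: abs_minus_commute)
  qed (use hN hI m K eta p in auto)
  also have "\<dots> = (4*\<eta>*K) * ((p*m/2)*m)" by (simp add: algebra_simps)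
  also have "\<dots> \<le> (4*\<eta>*K) * (D*m)"
    using Dlow m eta K by (intro mult_left_mono mult_right_mono) auto
  finally have "\<bar>(N - p*I)*m + I*(p*m - D)\<bar> \<le> (4*\<eta>*K) * (D*m)" .
  moreover have Y: "D*m > 0" using D0 m by simp
  ultimately show ?thesis unfolding eq abs_divide abs_of_pos[OF Y] pos_divide_le_eq[OF Y] by simp
qed

lemma abs_int_bound:
  fixes h g :: "_ \<Rightarrow> real"
  assumes "integrable M h" "integrable M g" "\<And>x. \<bar>h x\<bar> \<le> g x"
  shows "\<bar>integral\<^sup>L M h\<bar> \<le> integral\<^sup>L M g"
proof -
  have "integral\<^sup>L M h \<le> integral\<^sup>L M g"
    using assms by (intro integral_mono) (auto simp: abs_le_iff)
  moreover have "integral\<^sup>L M (\<lambda>x. - h x) \<le> integral\<^sup>L M g"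
    using assms by (intro integral_mono) (auto simp: abs_le_iff)
  ultimately show ?thesis by (simp add: abs_le_iff)
qed

lemma intQ:
  fixes Q :: "real \<Rightarrow> 'a::metric_space \<Rightarrow> ('a \<times> real) measure" and h :: "'a \<times> real \<Rightarrow> real"
  assumes Qk: "Q e \<in> borel \<rightarrow>\<^sub>M subprob_algebra borel"
    and hm: "h \<in> borel_measurable borel" and hB: "\<And>z. \<bar>h z\<bar> \<le> B"
  shows "integrable (Q e y) h"
proof -
  interpret subprob_space "Q e y" by (rule subprob_space_kernel[OF Qk]) simp
  have setsQ: "sets (Q e y) = sets borel" by (rule sets_kernel[OF Qk]) simp
  show ?thesis
    by (rule integrable_const_bound[where B=B]) (use hB hm in \<open>auto simp: measurable_cong_sets[OF setsQ refl]\<close>)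
qed

lemma core:
  fixes Q :: "real \<Rightarrow> 'a::metric_space \<Rightarrow> ('a \<times> real) measure" and f :: "real \<Rightarrow> real"
  assumes Qk: "Q e \<in> borel \<rightarrow>\<^sub>M subprob_algebra borel"
    and Sb: "\<forall>i\<in>{1..M}. S i \<in> sets borel" and b: "b \<in> {1..M}" and d: "d \<in> {1..M}"
    and mpos: "Pk Q e y (S b) > 0" and p: "p > 0"
    and hP: "\<forall>z\<in>S b. \<bar>Pk Q e z (S d) / p - 1\<bar> < \<eta>" and eta: "0 \<le> \<eta>" "\<eta> \<le> 1/2"
    and tau: "\<tau> > 0" and K: "\<forall>t\<ge>0. \<bar>f t\<bar> \<le> K" and fc: "continuous_on {0..} f"
  shows "\<bar>ET (Qbar M S Q) e (y,b) (Sbar S (b,d)) (\<lambda>t. f (t/\<tau>)) - ET Q e y (S b) (\<lambda>t. f (t/\<tau>))\<bar> \<le> 4*\<eta>*K"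
proof -
  have K0: "K \<ge> 0" using K by force
  have Sbb: "S b \<in> sets borel" and Sd: "S d \<in> sets borel" using Sb b d by auto
  define G where "G = (\<lambda>t. indicator {0..} (t/\<tau>) *\<^sub>R f (t/\<tau>))"
  have Gm: "G \<in> borel_measurable borel"
  proof -
    have "(\<lambda>s. indicator {0..} s *\<^sub>R f s) \<in> borel_measurable borel"
      by (rule borel_measurable_continuous_on_indicator[OF _ fc]) simp
    moreover have "(\<lambda>t::real. t/\<tau>) \<in> borel_measurable borel" by simp
    ultimately show ?thesis unfolding G_def by (rule measurable_compose[rotated])
  qed
  have GK: "\<bar>G t\<bar> \<le> K" for t
    unfolding G_def using K K0 tau by (auto simp: indicator_def)
  have Gf: "t \<ge> 0 \<Longrightarrow> G t = f (t/\<tau>)" for t unfolding G_def using tau by simp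
  have sndm: "(snd :: 'a \<times> real \<Rightarrow> real) \<in> borel_measurable borel"
    by (intro borel_measurable_continuous_onI continuous_intros)
  have Gsm: "(\<lambda>z::'a \<times> real. G (snd z)) \<in> borel_measurable borel"
    by (rule measurable_compose[OF sndm Gm])
  define B0 :: "('a \<times> real) set" where "B0 = S b \<times> {0..}"
  have B0b: "B0 \<in> sets borel" unfolding B0_def by (intro times_borel Sbb) simp
  have indm: "(indicator B0 :: 'a \<times> real \<Rightarrow> real) \<in> borel_measurable borel"
    by (rule borel_measurable_indicator[OF B0b])
  have Pdm: "(\<lambda>z::'a \<times> real. Pk Q e (fst z) (S d)) \<in> borel_measurable borel"
    by (rule measurable_compose[OF fst_meas Pk_meas[of Q e, OF Qk Sd]])
  have Pd01: "0 \<le> Pk Q e z (S d) \<and> Pk Q e z (S d) \<le> 1" for z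
  proof -
    interpret subprob_space "Q e z" by (rule subprob_space_kernel[OF Qk]) simp
    show ?thesis unfolding Pk_def using subprob_measure_le_1 by simp
  qed
  have Pdp: "z \<in> B0 \<Longrightarrow> \<bar>Pk Q e (fst z) (S d) - p\<bar> \<le> \<eta> * p" for z
  proof -
    assume "z \<in> B0"
    then have "\<bar>Pk Q e (fst z) (S d) / p - 1\<bar> < \<eta>" using hP unfolding B0_def by auto
    moreover have "Pk Q e (fst z) (S d) - p = p * (Pk Q e (fst z) (S d) / p - 1)" using p by (simp add: field_simps)
    ultimately show ?thesis using p by (simp add: abs_mult mult.commute)
  qed
  have setsQ: "sets (Q e y) = sets borel" by (rule sets_kernel[OF Qk]) simp
  have spQ: "space (Q e y) = UNIV" using sets_eq_imp_space_eq[OF setsQ] by simp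
  define N where "N = (\<integral>z. indicator B0 z * Pk Q e (fst z) (S d) * G (snd z) \<partial>(Q e y))"
  define D where "D = (\<integral>z. indicator B0 z * Pk Q e (fst z) (S d) * 1 \<partial>(Q e y))"
  define I where "I = (\<integral>z. indicator B0 z * G (snd z) \<partial>(Q e y))"
  define m where "m = Pk Q e y (S b)"
  have m_int: "m = (\<integral>z. indicator B0 z \<partial>(Q e y))"
    unfolding m_def Pk_def B0_def by (simp add: spQ)
  have c0: "1 / m > 0" using mpos m_def by simp
  note iQ = intQ[of Q e, OF Qk]
  have ab1: "\<bar>a * c\<bar> \<le> B" if "\<bar>a\<bar> \<le> 1" "\<bar>c\<bar> \<le> B" for a c B :: real
  proof -
    have "\<bar>a\<bar> * \<bar>c\<bar> \<le> 1 * B" using that by (intro mult_mono) auto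
    then show ?thesis by (simp add: abs_mult)
  qed
  have ind1: "\<bar>indicator B0 z :: real\<bar> \<le> 1" for z by (simp add: indicator_def)
  have Pd1: "\<bar>Pk Q e (fst z) (S d)\<bar> \<le> 1" for z using Pd01[of "fst z"] by simp
  have b1: "\<bar>indicator B0 z * Pk Q e (fst z) (S d) * G (snd z)\<bar> \<le> K" for z
    by (rule ab1[OF ab1[OF ind1 Pd1] GK])
  have b2: "\<bar>indicator B0 z * Pk Q e (fst z) (S d) * 1\<bar> \<le> 1" for z
    using ab1[OF ind1 Pd1] by simp
  have b3: "\<bar>indicator B0 z * G (snd z)\<bar> \<le> K" for z
    by (rule ab1[OF ind1 GK])
  have m1: "(\<lambda>z. indicator B0 z * Pk Q e (fst z) (S d) * G (snd z)) \<in> borel_measurable borel"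
    by (intro borel_measurable_times indm Pdm Gsm)
  have m2: "(\<lambda>z. indicator B0 z * Pk Q e (fst z) (S d) * 1) \<in> borel_measurable borel"
    by (intro borel_measurable_times indm Pdm borel_measurable_const)
  have m3: "(\<lambda>z. indicator B0 z * G (snd z)) \<in> borel_measurable borel"
    by (intro borel_measurable_times indm Gsm)
  have i1: "integrable (Q e y) (\<lambda>z. indicator B0 z * Pk Q e (fst z) (S d) * G (snd z))"
    by (rule iQ[OF m1 b1])
  have i2: "integrable (Q e y) (\<lambda>z. indicator B0 z * Pk Q e (fst z) (S d) * 1)"
    by (rule iQ[OF m2 b2])
  have i3: "integrable (Q e y) (\<lambda>z. indicator B0 z * G (snd z))"
    by (rule iQ[OF m3 b3])
  have i4: "integrable (Q e y) (\<lambda>z. indicator B0 z :: real)"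
    by (rule iQ[OF indm ind1])
  have hD: "\<bar>D - p*m\<bar> \<le> \<eta>*p*m"
  proof -
    have "D - p*m = (\<integral>z. indicator B0 z * Pk Q e (fst z) (S d) * 1 - p * indicator B0 z \<partial>(Q e y))"
      unfolding D_def m_int using i2 i4 by simp
    also have "\<bar>\<dots>\<bar> \<le> (\<integral>z. \<eta>*p * indicator B0 z \<partial>(Q e y))"
    proof (rule abs_int_bound)
      show "integrable (Q e y) (\<lambda>z. indicator B0 z * Pk Q e (fst z) (S d) * 1 - p * indicator B0 z)"
        using i2 i4 by simp
      show "integrable (Q e y) (\<lambda>z. \<eta> * p * indicator B0 z)" using i4 by simp
      fix z show "\<bar>indicator B0 z * Pk Q e (fst z) (S d) * 1 - p * indicator B0 z\<bar> \<le> \<eta> * p * indicator B0 z"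
        using Pdp[of z] by (cases "z \<in> B0") (auto simp: algebra_simps)
    qed
    also have "\<dots> = \<eta>*p*m" unfolding m_int by simp
    finally show ?thesis .
  qed
  have hN: "\<bar>N - p*I\<bar> \<le> \<eta>*p*K*m"
  proof -
    have "N - p*I = (\<integral>z. indicator B0 z * Pk Q e (fst z) (S d) * G (snd z) - p * (indicator B0 z * G (snd z)) \<partial>(Q e y))"
      unfolding N_def I_def using i1 i3 by simp
    also have "\<bar>\<dots>\<bar> \<le> (\<integral>z. \<eta>*p*K * indicator B0 z \<partial>(Q e y))"
    proof (rule abs_int_bound)
      show "integrable (Q e y) (\<lambda>z. indicator B0 z * Pk Q e (fst z) (S d) * G (snd z) - p * (indicator B0 z * G (snd z)))"
        using i1 i3 by simp
      show "integrable (Q e y) (\<lambda>z. \<eta> * p * K * indicator B0 z)" using i4 by simp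
      fix z
      show "\<bar>indicator B0 z * Pk Q e (fst z) (S d) * G (snd z) - p * (indicator B0 z * G (snd z))\<bar> \<le> \<eta> * p * K * indicator B0 z"
      proof (cases "z \<in> B0")
        case True
        have "\<bar>Pk Q e (fst z) (S d) * G (snd z) - p * G (snd z)\<bar> = \<bar>Pk Q e (fst z) (S d) - p\<bar> * \<bar>G (snd z)\<bar>"
          by (simp add: abs_mult[symmetric] algebra_simps)
        also have "\<dots> \<le> (\<eta> * p) * K"
          using Pdp[OF True] GK[of "snd z"] eta p by (intro mult_mono) auto
        finally show ?thesis using True by simp
      qed simp
    qed
    also have "\<dots> = \<eta>*p*K*m" unfolding m_int by simp
    finally show ?thesis .
  qed
  have hI: "\<bar>I\<bar> \<le> K*m"
  proof -
    have "\<bar>I\<bar> \<le> (\<integral>z. K * indicator B0 z \<partial>(Q e y))"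
      unfolding I_def
    proof (rule abs_int_bound)
      show "integrable (Q e y) (\<lambda>z. K * indicator B0 z)" using i4 by simp
      fix z show "\<bar>indicator B0 z * G (snd z)\<bar> \<le> K * indicator B0 z"
        using GK[of "snd z"] by (cases "z \<in> B0") auto
    qed (rule i3)
    also have "\<dots> = K*m" unfolding m_int by simp
    finally show ?thesis .
  qed
  have spQb: "space (Qbar M S Q e (y,b)) = UNIV"
    using sets_eq_imp_space_eq[OF Qbar_sets[of M S Q e y b]] by simp
  have num: "(\<integral>z. indicator ((S b \<times> {d}) \<times> {0..}) z * f (snd z / \<tau>) \<partial>(Qbar M S Q e (y,b))) = (1/m) * N"
  proof -
    have "(\<integral>z. indicator ((S b \<times> {d}) \<times> {0..}) z * f (snd z / \<tau>) \<partial>(Qbar M S Q e (y,b)))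
        = (\<integral>z. indicator ((S b \<times> {d}) \<times> {0..}) z * G (snd z) \<partial>(Qbar M S Q e (y,b)))"
      by (rule Bochner_Integration.integral_cong) (auto simp: indicator_def Gf)
    also have "\<dots> = (1/m) * N"
      unfolding Qbar_integral[of Q e M S b d G y, OF Qk Sb Sbb d Gm] N_def m_def B0_def ..
    finally show ?thesis .
  qed
  have den: "measure (Qbar M S Q e (y,b)) ((S b \<times> {d}) \<times> {0..}) = (1/m) * D"
    using Qbar_integral[of Q e M S b d "\<lambda>_. 1" y, OF Qk Sb Sbb d borel_measurable_const]
    by (simp add: D_def m_def B0_def spQb)
  have ETbar: "ET (Qbar M S Q) e (y,b) (Sbar S (b,d)) (\<lambda>t. f (t/\<tau>)) = N / D"
    unfolding ET_def Pk_def Sbar_def using num den c0 by simp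
  have ETQ: "ET Q e y (S b) (\<lambda>t. f (t/\<tau>)) = I / m"
  proof -
    have "(\<integral>z. indicator (S b \<times> {0..}) z * f (snd z / \<tau>) \<partial>(Q e y)) = I"
      unfolding I_def B0_def
      by (rule Bochner_Integration.integral_cong) (auto simp: indicator_def Gf)
    then show ?thesis unfolding ET_def m_def by simp
  qed
  show ?thesis unfolding ETbar ETQ
    by (rule alg[OF _ p eta K0 hD hN hI]) (use mpos m_def in simp)
qed



theorem corollary4p3:
  fixes M :: nat
    and S :: "nat \<Rightarrow> 'a::metric_space set"
    and Q :: "real \<Rightarrow> 'a \<Rightarrow> ('a \<times> real) measure"
    and Pij :: "real \<Rightarrow> nat \<Rightarrow> nat \<Rightarrow> real"
    and tau :: "real \<Rightarrow> nat \<Rightarrow> nat \<Rightarrow> real"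
    and a b :: nat
    and f :: "real \<Rightarrow> real"
  assumes S_borel: "\<forall>i\<in>{1..M}. S i \<in> sets borel"
    and S_disj: "\<forall>i\<in>{1..M}. \<forall>j\<in>{1..M}. i \<noteq> j \<longrightarrow> S i \<inter> S j = {}"
    and S_cover: "(\<Union>i\<in>{1..M}. S i) = UNIV"
    and Q_kernel: "\<forall>e>0. Q e \<in> borel \<rightarrow>\<^sub>M subprob_algebra borel"
    and Q_prob: "\<forall>e>0. \<forall>x. prob_space (Q e x)"
    and Q_nonneg: "\<forall>e>0. \<forall>x. emeasure (Q e x) (UNIV \<times> {0..}) = 1"
    and no_self: "\<forall>e>0. \<forall>i\<in>{1..M}. \<forall>x\<in>S i. Pk Q e x (S i) = 0"
    and Pii: "\<forall>e>0. \<forall>i\<in>{1..M}. Pij e i i = 0"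
    and dichotomy: "\<forall>i\<in>{1..M}. \<forall>j\<in>{1..M}. i \<noteq> j \<longrightarrow>
        (\<forall>e>0. Pij e i j = 0 \<and> (\<forall>x\<in>S i. Pk Q e x (S j) = 0)) \<or>
        ((\<forall>e>0. Pij e i j > 0 \<and> (\<forall>x\<in>S i. Pk Q e x (S j) > 0)) \<and>
         (\<forall>\<delta>>0. \<forall>\<^sub>F e in at_right 0. \<forall>x\<in>S i. \<bar>Pk Q e x (S j) / Pij e i j - 1\<bar> < \<delta>))"
    and tau_pos: "\<forall>i\<in>{1..M}. \<forall>j\<in>{1..M}. conn Pij i j \<longrightarrow> (\<forall>e>0. tau e i j > 0)"
    and tau_mean: "\<forall>i\<in>{1..M}. \<forall>j\<in>{1..M}. conn Pij i j \<longrightarrow>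
        (\<forall>\<delta>>0. \<forall>\<^sub>F e in at_right 0. \<forall>x\<in>S i. \<bar>ET Q e x (S j) (\<lambda>t. t) / tau e i j - 1\<bar> < \<delta>)"
    and T_law: "\<forall>g :: real \<Rightarrow> real. continuous_on {0..} g \<longrightarrow> bounded (g ` {0..}) \<longrightarrow>
        (\<forall>i\<in>{1..M}. \<forall>j\<in>{1..M}. conn Pij i j \<longrightarrow>
          (\<forall>\<delta>>0. \<forall>\<^sub>F e in at_right 0. \<forall>x1\<in>S i. \<forall>x2\<in>S i.
             \<bar>ET Q e x1 (S j) (\<lambda>t. g (t / tau e i j)) - ET Q e x2 (S j) (\<lambda>t. g (t / tau e i j))\<bar> < \<delta>))"
    and i_idx: "(a, b) \<in> Sbar_idx M Pij"
    and f_cont: "continuous_on {0..} f"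
    and f_bdd: "bounded (f ` {0..})"
  shows "\<forall>\<delta>>0. \<forall>\<^sub>F e in at_right 0.
           \<forall>x1\<in>Sbar S (a, b). \<forall>x2\<in>Sbar S (a, b).
           \<forall>j1\<in>Sbar_idx M Pij. \<forall>j2\<in>Sbar_idx M Pij.
             Pbar Pij e (a, b) j1 > 0 \<longrightarrow> Pbar Pij e (a, b) j2 > 0 \<longrightarrow>
             \<bar>ET (Qbar M S Q) e x1 (Sbar S j1) (\<lambda>t. f (t / tau e a b))
              - ET (Qbar M S Q) e x2 (Sbar S j2) (\<lambda>t. f (t / tau e a b))\<bar> < \<delta>"
proof (intro allI impI)
  fix \<delta> :: real assume dpos: "\<delta> > 0"
  obtain K where Kpos: "K > 0" and K: "\<forall>t\<ge>0. \<bar>f t\<bar> \<le> K"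
    using f_bdd unfolding bounded_pos by force
  define \<eta> where "\<eta> = min (1/2) (\<delta> / (12*K))"
  have eta0: "0 \<le> \<eta>" and eta1: "\<eta> \<le> 1/2" unfolding \<eta>_def using dpos Kpos by auto
  have etaK: "4*\<eta>*K \<le> \<delta>/3"
  proof -
    have "\<eta> \<le> \<delta> / (12*K)" unfolding \<eta>_def by simp
    then have "\<eta> * K \<le> \<delta> / (12*K) * K" using Kpos by (intro mult_right_mono) auto
    also have "\<dots> = \<delta>/12" using Kpos by simp
    finally show ?thesis by simp
  qed
  have ab: "a \<in> {1..M}" "b \<in> {1..M}" "conn Pij a b" using i_idx unfolding Sbar_idx_def by auto
  have connE: "\<exists>e>0. Pij e i j \<noteq> 0" if "conn Pij i j" for i j using that unfolding conn_def by auto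
  have conn_neq: "i \<noteq> j" if "conn Pij i j" "i \<in> {1..M}" for i j
    using connE[OF that(1)] Pii that(2) by auto
  have second: "(\<forall>e>0. Pij e i j > 0 \<and> (\<forall>x\<in>S i. Pk Q e x (S j) > 0)) \<and>
         (\<forall>\<delta>>0. \<forall>\<^sub>F e in at_right 0. \<forall>x\<in>S i. \<bar>Pk Q e x (S j) / Pij e i j - 1\<bar> < \<delta>)"
    if "conn Pij i j" "i \<in> {1..M}" "j \<in> {1..M}" for i j
    using dichotomy that conn_neq[OF that(1,2)] connE[OF that(1)] by blast
  have mpos: "\<forall>e>0. \<forall>x\<in>S a. Pk Q e x (S b) > 0" using second[OF ab(3) ab(1) ab(2)] by blast
  have taupos: "\<forall>e>0. tau e a b > 0" using tau_pos ab by blast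
  have ev1: "\<forall>\<^sub>F e in at_right 0. (0::real) < e" by (rule eventually_at_right_less)
  have ev2: "\<forall>\<^sub>F e in at_right 0. \<forall>x1\<in>S a. \<forall>x2\<in>S a.
             \<bar>ET Q e x1 (S b) (\<lambda>t. f (t / tau e a b)) - ET Q e x2 (S b) (\<lambda>t. f (t / tau e a b))\<bar> < \<delta>/3"
  proof -
    have "\<forall>i\<in>{1..M}. \<forall>j\<in>{1..M}. conn Pij i j \<longrightarrow>
          (\<forall>\<delta>>0. \<forall>\<^sub>F e in at_right 0. \<forall>x1\<in>S i. \<forall>x2\<in>S i.
             \<bar>ET Q e x1 (S j) (\<lambda>t. f (t / tau e i j)) - ET Q e x2 (S j) (\<lambda>t. f (t / tau e i j))\<bar> < \<delta>)"
      using T_law f_cont f_bdd by blast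
    then show ?thesis using ab dpos by (meson divide_pos_pos zero_less_numeral)
  qed
  have ev3: "\<forall>\<^sub>F e in at_right 0. \<forall>d\<in>{1..M}. conn Pij b d \<longrightarrow>
              (\<forall>z\<in>S b. \<bar>Pk Q e z (S d) / Pij e b d - 1\<bar> < \<eta>)"
  proof (rule eventually_ball_finite, simp, intro ballI)
    fix d assume d: "d \<in> {1..M}"
    show "\<forall>\<^sub>F e in at_right 0. conn Pij b d \<longrightarrow> (\<forall>z\<in>S b. \<bar>Pk Q e z (S d) / Pij e b d - 1\<bar> < \<eta>)"
    proof (cases "conn Pij b d")
      case True
      show ?thesis
      proof (cases "\<eta> > 0")
        case True
        then show ?thesis using second[OF \<open>conn Pij b d\<close> ab(2) d] by (auto elim: eventually_mono)
      next
        case False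
        then have "\<eta> = 0" using eta0 by simp
        then have "\<eta> = \<delta> / (12*K)" unfolding \<eta>_def using dpos Kpos by (auto simp: min_def split: if_splits)
        then show ?thesis using dpos Kpos \<open>\<eta> = 0\<close> by simp
      qed
    qed simp
  qed
  show "\<forall>\<^sub>F e in at_right 0.
           \<forall>x1\<in>Sbar S (a, b). \<forall>x2\<in>Sbar S (a, b).
           \<forall>j1\<in>Sbar_idx M Pij. \<forall>j2\<in>Sbar_idx M Pij.
             Pbar Pij e (a, b) j1 > 0 \<longrightarrow> Pbar Pij e (a, b) j2 > 0 \<longrightarrow>
             \<bar>ET (Qbar M S Q) e x1 (Sbar S j1) (\<lambda>t. f (t / tau e a b))
              - ET (Qbar M S Q) e x2 (Sbar S j2) (\<lambda>t. f (t / tau e a b))\<bar> < \<delta>"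
    using ev1 ev2 ev3
  proof eventually_elim
    case (elim e)
    note e0 = elim(1) and TL = elim(2) and UC = elim(3)
    have Qk: "Q e \<in> borel \<rightarrow>\<^sub>M subprob_algebra borel" using Q_kernel e0 by blast
    have tau0: "tau e a b > 0" using taupos e0 by blast
    have one: "\<bar>ET (Qbar M S Q) e (y, b) (Sbar S j) (\<lambda>t. f (t / tau e a b))
               - ET Q e y (S b) (\<lambda>t. f (t / tau e a b))\<bar> \<le> 4*\<eta>*K"
      if y: "y \<in> S a" and j: "j \<in> Sbar_idx M Pij" and pj: "Pbar Pij e (a, b) j > 0" for y j
    proof -
      obtain c d where jcd: "j = (c, d)" by (cases j)
      have cd: "c \<in> {1..M}" "d \<in> {1..M}" "conn Pij c d" using j jcd unfolding Sbar_idx_def by auto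
      have cb: "c = b" and pp: "Pij e b d > 0" using pj jcd unfolding Pbar_def by (auto split: if_splits)
      show ?thesis unfolding jcd cb
        by (rule core[of Q e M S b d y "Pij e b d" \<eta> "tau e a b" f K, OF Qk S_borel ab(2) cd(2)])
           (use mpos e0 y pp UC cd cb eta0 eta1 tau0 K f_cont in auto)
    qed
    show ?case
    proof (intro ballI impI)
      fix x1 x2 j1 j2
      assume x1: "x1 \<in> Sbar S (a, b)" and x2: "x2 \<in> Sbar S (a, b)"
        and j1: "j1 \<in> Sbar_idx M Pij" and j2: "j2 \<in> Sbar_idx M Pij"
        and p1: "Pbar Pij e (a, b) j1 > 0" and p2: "Pbar Pij e (a, b) j2 > 0"
      obtain y1 where y1: "y1 \<in> S a" "x1 = (y1, b)" using x1 unfolding Sbar_def by auto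
      obtain y2 where y2: "y2 \<in> S a" "x2 = (y2, b)" using x2 unfolding Sbar_def by auto
      have A: "\<bar>ET (Qbar M S Q) e x1 (Sbar S j1) (\<lambda>t. f (t / tau e a b))
               - ET Q e y1 (S b) (\<lambda>t. f (t / tau e a b))\<bar> \<le> \<delta>/3"
        using one[OF y1(1) j1 p1] etaK y1(2) by simp
      have B: "\<bar>ET (Qbar M S Q) e x2 (Sbar S j2) (\<lambda>t. f (t / tau e a b))
               - ET Q e y2 (S b) (\<lambda>t. f (t / tau e a b))\<bar> \<le> \<delta>/3"
        using one[OF y2(1) j2 p2] etaK y2(2) by simp
      have C: "\<bar>ET Q e y1 (S b) (\<lambda>t. f (t / tau e a b)) - ET Q e y2 (S b) (\<lambda>t. f (t / tau e a b))\<bar> < \<delta>/3"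
        using TL y1(1) y2(1) by blast
      show "\<bar>ET (Qbar M S Q) e x1 (Sbar S j1) (\<lambda>t. f (t / tau e a b))
              - ET (Qbar M S Q) e x2 (Sbar S j2) (\<lambda>t. f (t / tau e a b))\<bar> < \<delta>"
        using A B C by linarith
    qed
  qed
qed


end
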